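(* Let $m\ge3$ be odd, let $s\ge2$ be even but not divisible by $4$, $n=sm$, and $\Gamma=C_n[mK_1]$. Let $\eta_1=(t,t,\dots,t)r$, $\eta_2=(\gamma_1,\dots,\gamma_n)z$ with $\gamma_{2i+1}=\gamma_{2i+2}=tc^{i}$ for $0\le i<n/2$, and $H=\langle\eta_1,\eta_2\rangle$. Then $\Gamma$ is the skeleton of a polytopal orientable reflexible map $\mathcal M$ of type $\{n,2m\}$ with $\mathrm{Aut}^+(\mathcal M)=H$.
   Context: $C_n[mK_1]$ is the graph with vertex set $\{1,\dots,n\}\times\{1,\dots,m\}$ in which $(i_1,j_1)$ is adjacent to $(i_2,j_2)$ if and only if $i_1\equiv i_2\pm1\pmod n$ (residues mod $n$ taken in $\{1,\dots,n\}$). Permutations act on the right ($x\alpha$ is the image of $x$) and products are composed left to right, both in $S_m$ and in $\mathrm{Aut}(\Gamma)$. For $\alpha_1,\dots,\alpha_n\in S_m$ and a permutation $x$ of $\{1,\dots,n\}$ in the dihedral group $D_n=\langle r,z\rangle$, $(\alpha_1,\dots,\alpha_n)x$ denotes the automorphism of $\Gamma$ mapping $(i,j)\mapsto(ix,\,j\alpha_i)$; $1$ denotes an identity permutation. Here $c=(1\,2\,\cdots\,m)\in S_m$; $t\in S_m$ fixes $1$ and maps $j\mapsto m-j+2$ for $2\le j\le m$; $r$ is the permutation $i\mapsto i+1 \pmod n$ of $\{1,\dots,n\}$; and $z$ fixes $1$ and maps $j\mapsto n-j+2$ for $2\le j\le n$. A map is a finite connected graph (its skeleton), viewed as a 1-dimensional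 CW complex, embedded in a closed surface so that every connected component of the complement (a face) is homeomorphic to an open disk. The map is polytopal if the boundary of each face is a cycle of the skeleton and every edge lies on the boundary of exactly two distinct faces. An automorphism of a map is an automorphism of the skeleton that extends to a homeomorphism of the surface; these form the group $\mathrm{Aut}(\mathcal M)$. A map is rotary if the stabiliser of each vertex contains a cyclic group acting transitively on the edges incident to it, and the stabiliser of each face contains a cyclic group acting transitively on the vertices (and edges) of the face; it has type $\{p,q\}$ if each face has $p$ edges on its boundary and the skeleton is $q$-valent. A rotary map is reflexible if the stabiliser of a face also contains an automorphism acting as a reflection of that face; a reflexible map is orientable or non-orientable according to its surface. For a polytopal rotary map and a flag (incident vertex–edge–face triple) $\Phi=(v,e,f)$, distinguished generators are automorphisms $\sigma_1,\sigma_2$ such that $\sigma_1$ preserves $f$ and acts as a one-step rotation of its boundary cycle, $\sigma_2$ fixes $v$ and acts as a one-step rotation of the edges around $v$, and $\sigma_1\sigma_2$ is an involution reversing $e$; the rotational group is $\mathrm{Aut}^+(\mathcal M)=\langle\sigma_1,\sigma_2\rangle$. *)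

theory Defs
  imports Main
begin

(* Combinatorial model: orientable maps with skeleton Gamma = C_n[mK_1] are given by
   rotation systems on the darts of Gamma (Heffter-Edmonds). Vertices are pairs (i,j). *)

type_synonym vtx = "nat \<times> nat"
type_synonym dart = "vtx \<times> vtx"

definition Vs :: "nat \<Rightarrow> nat \<Rightarrow> vtx set" where
  "Vs n m = {1..n} \<times> {1..m}"

definition adj :: "nat \<Rightarrow> nat \<Rightarrow> vtx \<Rightarrow> vtx \<Rightarrow> bool" where
  "adj n m x y \<longleftrightarrow> x \<in> Vs n m \<and> y \<in> Vs n m \<and>
     (fst x mod n = (fst y + 1) mod n \<or> (fst x + 1) mod n = fst y mod n)"

definition darts :: "nat \<Rightarrow> nat \<Rightarrow> dart set" where
  "darts n m = {(x, y). adj n m x y}"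

definition rev_dart :: "dart \<Rightarrow> dart" where
  "rev_dart d = (snd d, fst d)"

definition rotation_system :: "nat \<Rightarrow> nat \<Rightarrow> (dart \<Rightarrow> dart) \<Rightarrow> bool" where
  "rotation_system n m rho \<longleftrightarrow>
     bij_betw rho (darts n m) (darts n m) \<and>
     (\<forall>d\<in>darts n m. fst (rho d) = fst d) \<and>
     (\<forall>d\<in>darts n m. \<forall>d'\<in>darts n m. fst d = fst d' \<longrightarrow> (\<exists>k. (rho ^^ k) d = d'))"

(* face successor: traverse the dart, then turn *)
definition phi :: "(dart \<Rightarrow> dart) \<Rightarrow> dart \<Rightarrow> dart" where
  "phi rho d = rho (rev_dart d)"

(* a face is identified with the cyclically ordered set of darts of its boundary walk *)
definition face :: "(dart \<Rightarrow> dart) \<Rightarrow> dart \<Rightarrow> dart set" where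
  "face rho d = {(phi rho ^^ k) d | k. True}"

definition faces :: "nat \<Rightarrow> nat \<Rightarrow> (dart \<Rightarrow> dart) \<Rightarrow> dart set set" where
  "faces n m rho = face rho ` darts n m"

definition polytopal :: "nat \<Rightarrow> nat \<Rightarrow> (dart \<Rightarrow> dart) \<Rightarrow> bool" where
  "polytopal n m rho \<longleftrightarrow>
     (\<forall>F\<in>faces n m rho. inj_on fst F \<and> card F \<ge> 3) \<and>
     (\<forall>d\<in>darts n m. face rho d \<noteq> face rho (rev_dart d))"

definition map_type :: "nat \<Rightarrow> nat \<Rightarrow> (dart \<Rightarrow> dart) \<Rightarrow> nat \<Rightarrow> nat \<Rightarrow> bool" where
  "map_type n m rho p q \<longleftrightarrow>
     (\<forall>F\<in>faces n m rho. card F = p) \<and> (\<forall>x\<in>Vs n m. card {y. adj n m x y} = q)"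

definition gd :: "(vtx \<Rightarrow> vtx) \<Rightarrow> dart \<Rightarrow> dart" where
  "gd g d = (g (fst d), g (snd d))"

definition orient_pres :: "nat \<Rightarrow> nat \<Rightarrow> (dart \<Rightarrow> dart) \<Rightarrow> (vtx \<Rightarrow> vtx) \<Rightarrow> bool" where
  "orient_pres n m rho g \<longleftrightarrow> (\<forall>d\<in>darts n m. rho (gd g d) = gd g (rho d))"

definition orient_rev :: "nat \<Rightarrow> nat \<Rightarrow> (dart \<Rightarrow> dart) \<Rightarrow> (vtx \<Rightarrow> vtx) \<Rightarrow> bool" where
  "orient_rev n m rho g \<longleftrightarrow> (\<forall>d\<in>darts n m. rho (gd g (rho d)) = gd g d)"

(* automorphism of the map: skeleton automorphism (identity off the vertex set)
   extending to a homeomorphism, i.e. preserving or reversing the rotation *)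
definition map_aut :: "nat \<Rightarrow> nat \<Rightarrow> (dart \<Rightarrow> dart) \<Rightarrow> (vtx \<Rightarrow> vtx) \<Rightarrow> bool" where
  "map_aut n m rho g \<longleftrightarrow>
     (\<forall>x. x \<notin> Vs n m \<longrightarrow> g x = x) \<and> bij_betw g (Vs n m) (Vs n m) \<and>
     (\<forall>x y. adj n m x y \<longleftrightarrow> adj n m (g x) (g y)) \<and>
     (orient_pres n m rho g \<or> orient_rev n m rho g)"

definition face_image :: "nat \<Rightarrow> nat \<Rightarrow> (dart \<Rightarrow> dart) \<Rightarrow> (vtx \<Rightarrow> vtx) \<Rightarrow> dart set \<Rightarrow> dart set" where
  "face_image n m rho g F =
     (if orient_pres n m rho g then gd g ` F else rev_dart ` gd g ` F)"

definition rotary :: "nat \<Rightarrow> nat \<Rightarrow> (dart \<Rightarrow> dart) \<Rightarrow> bool" where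
  "rotary n m rho \<longleftrightarrow>
     (\<forall>v\<in>Vs n m. \<exists>g. map_aut n m rho g \<and> g v = v \<and>
        (\<forall>w w'. adj n m v w \<longrightarrow> adj n m v w' \<longrightarrow> (\<exists>k. (g ^^ k) w = w'))) \<and>
     (\<forall>F\<in>faces n m rho. \<exists>g. map_aut n m rho g \<and> face_image n m rho g F = F \<and>
        (\<forall>x\<in>fst ` F. \<forall>y\<in>fst ` F. \<exists>k. (g ^^ k) x = y) \<and>
        (\<forall>d\<in>F. \<forall>d'\<in>F. \<exists>k. {(g ^^ k) (fst d), (g ^^ k) (snd d)} = {fst d', snd d'}))"

definition reflexible :: "nat \<Rightarrow> nat \<Rightarrow> (dart \<Rightarrow> dart) \<Rightarrow> bool" where
  "reflexible n m rho \<longleftrightarrow> rotary n m rho \<and>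
     (\<forall>F\<in>faces n m rho. \<exists>g. map_aut n m rho g \<and> face_image n m rho g F = F \<and>
        (\<forall>d\<in>F. rev_dart (gd g d) \<in> F))"

definition is_flag :: "nat \<Rightarrow> nat \<Rightarrow> (dart \<Rightarrow> dart) \<Rightarrow> vtx \<Rightarrow> vtx \<Rightarrow> dart set \<Rightarrow> bool" where
  "is_flag n m rho v w F \<longleftrightarrow> adj n m v w \<and> F \<in> faces n m rho \<and> ((v, w) \<in> F \<or> (w, v) \<in> F)"

(* distinguished generators for the flag (v, edge {v,w}, F); products left to right,
   so sigma1 sigma2 is the map sigma2 o sigma1 *)
definition distinguished ::
  "nat \<Rightarrow> nat \<Rightarrow> (dart \<Rightarrow> dart) \<Rightarrow> vtx \<Rightarrow> vtx \<Rightarrow> dart set \<Rightarrow> (vtx \<Rightarrow> vtx) \<Rightarrow> (vtx \<Rightarrow> vtx) \<Rightarrow> bool" where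
  "distinguished n m rho v w F s1 s2 \<longleftrightarrow>
     map_aut n m rho s1 \<and> map_aut n m rho s2 \<and>
     face_image n m rho s1 F = F \<and>
     ((\<forall>d\<in>F. s1 (fst d) = fst (phi rho d)) \<or> (\<forall>d\<in>F. s1 (fst (phi rho d)) = fst d)) \<and>
     s2 v = v \<and>
     ((\<forall>d\<in>darts n m. fst d = v \<longrightarrow> s2 (snd d) = snd (rho d)) \<or>
      (\<forall>d\<in>darts n m. fst d = v \<longrightarrow> s2 (snd (rho d)) = snd d)) \<and>
     (s2 \<circ> s1) v = w \<and> (s2 \<circ> s1) w = v \<and> (\<forall>x. (s2 \<circ> s1) ((s2 \<circ> s1) x) = x)"

inductive_set gen_grp :: "(vtx \<Rightarrow> vtx) set \<Rightarrow> (vtx \<Rightarrow> vtx) set" for S where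
  gen_id: "id \<in> gen_grp S"
| gen_gen: "s \<in> S \<Longrightarrow> s \<in> gen_grp S"
| gen_comp: "f \<in> gen_grp S \<Longrightarrow> g \<in> gen_grp S \<Longrightarrow> f \<circ> g \<in> gen_grp S"
| gen_inv: "f \<in> gen_grp S \<Longrightarrow> inv f \<in> gen_grp S"

definition cperm :: "nat \<Rightarrow> nat \<Rightarrow> nat" where "cperm m j = j mod m + 1"
definition tperm :: "nat \<Rightarrow> nat \<Rightarrow> nat" where "tperm m j = (if j = 1 then 1 else m - j + 2)"
definition rperm :: "nat \<Rightarrow> nat \<Rightarrow> nat" where "rperm n i = i mod n + 1"
definition zperm :: "nat \<Rightarrow> nat \<Rightarrow> nat" where "zperm n i = (if i = 1 then 1 else n - i + 2)"

(* gamma_k = t c^i for k = 2i+1, 2i+2; left-to-right product: apply t, then c^i *)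
definition gamma :: "nat \<Rightarrow> nat \<Rightarrow> nat \<Rightarrow> nat" where
  "gamma m k = (cperm m ^^ ((k - 1) div 2)) \<circ> tperm m"

definition eta1 :: "nat \<Rightarrow> nat \<Rightarrow> vtx \<Rightarrow> vtx" where
  "eta1 n m x = (if x \<in> Vs n m then (rperm n (fst x), tperm m (snd x)) else x)"

definition eta2 :: "nat \<Rightarrow> nat \<Rightarrow> vtx \<Rightarrow> vtx" where
  "eta2 n m x = (if x \<in> Vs n m then (zperm n (fst x), gamma m (fst x) (snd x)) else x)"

end

theory Submission
  imports Defs
begin

definition ci :: "nat \<Rightarrow> int" where "ci k = int k - 1"
definition eps :: "int \<Rightarrow> int" where "eps I = (if even I then -1 else 1)"

lemma q_id1: "(I::int) div 2 + (I + 1) div 2 = I"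
  by (cases "even I") (auto elim!: evenE oddE)
lemma q_id2: "((I::int) + 1) div 2 + (- I) div 2 = 0"
  by (cases "even I") (auto elim!: evenE oddE)
lemma q_id3: "((I::int) + 1) div 2 - 2 * (I div 2) + (I - 1) div 2 = eps I"
  by (cases "even I") (auto elim!: evenE oddE simp: eps_def)

locale cm =
  fixes n m h :: nat
  assumes m3: "3 \<le> m" and nh: "n = 2*m*h" and h1: "1 \<le> h"
begin

lemma n6: "6 \<le> n"
proof -
  have "m \<le> m*h" using h1 by simp
  moreover have "n = 2*(m*h)" using nh by simp
  ultimately show ?thesis using m3 by linarith
qed

lemma npos: "0 < int n" using n6 by simp
lemma mpos: "0 < int m" using m3 by simp
lemma evn: "even n" using nh by simp
lemma mdvdn: "int m dvd int n" using nh by simp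

definition vv :: "int \<Rightarrow> int \<Rightarrow> vtx" where
  "vv I J = (nat (I mod int n) + 1, nat (J mod int m) + 1)"

lemma vv_eq_iff: "vv I J = vv I' J' \<longleftrightarrow> I mod int n = I' mod int n \<and> J mod int m = J' mod int m"
  using npos mpos unfolding vv_def by (auto simp: nat_eq_iff2)

lemma vv_cong: "I mod int n = I' mod int n \<Longrightarrow> J mod int m = J' mod int m \<Longrightarrow> vv I J = vv I' J'"
  by (simp add: vv_eq_iff)

lemma vv_in: "vv I J \<in> Vs n m"
  using npos mpos unfolding vv_def Vs_def
  by (auto simp: nat_le_iff nat_less_iff Suc_le_eq)

lemma ci_fst: "ci (fst (vv I J)) = I mod int n"
  using npos unfolding vv_def ci_def by simp
lemma ci_snd: "ci (snd (vv I J)) = J mod int m"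
  using mpos unfolding vv_def ci_def by simp

lemma Vs_vv: "x \<in> Vs n m \<Longrightarrow> x = vv (ci (fst x)) (ci (snd x))"
  unfolding Vs_def vv_def ci_def by (cases x) auto

lemma Vs_ex: "x \<in> Vs n m \<Longrightarrow> \<exists>I J. x = vv I J"
  using Vs_vv by blast

lemma int_fst: "int (fst (vv I J)) = I mod int n + 1"
  using npos unfolding vv_def by simp

lemma nat_mod_eq_int: "(a::nat) mod n = b mod n \<longleftrightarrow> int n dvd int a - int b"
  by (metis mod_eq_dvd_iff of_nat_eq_iff zmod_int)

lemma vv_cong_dvd: "int n dvd I - I' \<Longrightarrow> int m dvd J - J' \<Longrightarrow> vv I J = vv I' J'"
  by (simp add: vv_eq_iff mod_eq_dvd_iff)

lemma dvd_mod_shift: "int n dvd (a mod int n + c) - (b mod int n + d) \<longleftrightarrow> int n dvd (a + c) - (b + d)"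
proof -
  have e: "(a mod int n + c) - (b mod int n + d) = ((a+c) - (b+d)) + int n * (b div int n - a div int n)"
    by (simp add: algebra_simps minus_div_mult_eq_mod [symmetric])
  show ?thesis unfolding e by (simp add: dvd_add_left_iff)
qed

lemma adj_vv: "adj n m (vv I J) (vv I' J') \<longleftrightarrow> int n dvd (I' - I - 1) \<or> int n dvd (I' - I + 1)"
proof -
  have A: "int n dvd (I mod int n + 1) - (I' mod int n + 1 + 1) \<longleftrightarrow> int n dvd (I' - I + 1)"
  proof -
    have "int n dvd (I mod int n + 1) - (I' mod int n + 1 + 1) \<longleftrightarrow> int n dvd (I + 1) - (I' + 1 + 1)"
      using dvd_mod_shift[of I 1 I' "1+1"] by (simp add: add.assoc)
    also have "\<dots> \<longleftrightarrow> int n dvd - (I' - I + 1)"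
      by (rule arg_cong[where f="\<lambda>x. int n dvd x"]) simp
    finally show ?thesis by (simp only: dvd_minus_iff)
  qed
  have B: "int n dvd (I mod int n + 1 + 1) - (I' mod int n + 1) \<longleftrightarrow> int n dvd (I' - I - 1)"
  proof -
    have "int n dvd (I mod int n + 1 + 1) - (I' mod int n + 1) \<longleftrightarrow> int n dvd (I + 1 + 1) - (I' + 1)"
      using dvd_mod_shift[of I "1+1" I' "1"] by (simp add: add.assoc)
    also have "\<dots> \<longleftrightarrow> int n dvd - (I' - I - 1)"
      by (rule arg_cong[where f="\<lambda>x. int n dvd x"]) simp
    finally show ?thesis by (simp only: dvd_minus_iff)
  qed
  show ?thesis
    unfolding adj_def using vv_in[of I J] vv_in[of I' J'] A B
    by (simp add: nat_mod_eq_int int_fst add.assoc) (smt (verit))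
qed

lemma dvd_mod_shift2: "int n dvd (a mod int n - b mod int n - c) \<longleftrightarrow> int n dvd (a - b - c)"
proof -
  have e: "(a mod int n - b mod int n - c) = (a - b - c) + int n * (b div int n - a div int n)"
    by (simp add: algebra_simps minus_div_mult_eq_mod [symmetric])
  show ?thesis unfolding e by (simp add: dvd_add_left_iff)
qed

lemma jm2: "(2 * (J mod int m) + e - K) mod int m = (2 * J + e - K) mod int m"
proof -
  have e: "2 * (J mod int m) + e - K = (2 * J + e - K) + int m * (-2 * (J div int m))"
    by (simp add: algebra_simps minus_div_mult_eq_mod [symmetric])
  show ?thesis unfolding e by (rule mod_mult_self2)
qed
lemma jm1: "(2 * (J mod int m) - K) mod int m = (2 * J - K) mod int m"
  using jm2[of J 0 K] by simp

lemma n_ndvd2: "\<not> int n dvd 2" "\<not> int n dvd -2"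
  using n6 by (auto dest!: zdvd_imp_le)

lemma fw_dart: "(vv I J, vv (I+1) K) \<in> darts n m"
  unfolding darts_def by (simp add: adj_vv)
lemma bw_dart: "(vv I J, vv (I-1) K) \<in> darts n m"
  unfolding darts_def by (simp add: adj_vv)

lemma darts_cases:
  assumes "d \<in> darts n m"
  obtains I J K where "d = (vv I J, vv (I+1) K)" | I J K where "d = (vv I J, vv (I-1) K)"
proof -
  obtain x y where d: "d = (x,y)" and a: "adj n m x y" using assms unfolding darts_def by auto
  then have "x \<in> Vs n m" "y \<in> Vs n m" unfolding adj_def by auto
  then obtain I J I' K where x: "x = vv I J" and y: "y = vv I' K" using Vs_ex by metis
  from a have "int n dvd (I' - I - 1) \<or> int n dvd (I' - I + 1)" unfolding x y adj_vv .
  then show ?thesis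
  proof
    assume "int n dvd (I' - I - 1)"
    then have "vv I' K = vv (I+1) K" by (intro vv_cong_dvd) (simp_all add: algebra_simps)
    then show ?thesis using that d x y by simp
  next
    assume "int n dvd (I' - I + 1)"
    then have "vv I' K = vv (I-1) K" by (intro vv_cong_dvd) (simp_all add: algebra_simps)
    then show ?thesis using that d x y by simp
  qed
qed

lemma fw_ne_bw: "(vv I J, vv (I+1) K) \<noteq> (vv I' J', vv (I'-1) K')"
proof
  assume "(vv I J, vv (I+1) K) = (vv I' J', vv (I'-1) K')"
  then have "I mod int n = I' mod int n" "(I+1) mod int n = (I'-1) mod int n" by (auto simp: vv_eq_iff)
  then have "int n dvd I - I'" "int n dvd (I+1) - (I'-1)" by (auto simp: mod_eq_dvd_iff)
  then have "int n dvd ((I+1) - (I'-1)) - (I - I')" by (rule dvd_diff[rotated])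
  then show False using n_ndvd2 by simp
qed

lemma eps_mod: "eps (I mod int n) = eps I"
proof -
  have "(I mod int n) mod 2 = I mod 2" using evn by (intro mod_mod_cancel) simp
  then show ?thesis unfolding eps_def by (simp add: even_iff_mod_2_eq_zero)
qed

definition rh :: "dart \<Rightarrow> dart" where
  "rh d = (let I = ci (fst (fst d)); J = ci (snd (fst d)); I2 = ci (fst (snd d)); K = ci (snd (snd d)) in
     if int n dvd (I2 - I - 1) then (fst d, vv (I - 1) (2*J - K))
     else (fst d, vv (I + 1) (2*J + eps I - K)))"

lemma rh_fw: "rh (vv I J, vv (I+1) K) = (vv I J, vv (I-1) (2*J - K))"
proof -
  have c: "int n dvd ((I+1) mod int n - I mod int n - 1)" by (simp add: dvd_mod_shift2)
  show ?thesis unfolding rh_def Let_def ci_fst ci_snd fst_conv snd_conv using c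
    by (auto intro!: vv_cong simp: mod_simps jm1)
qed

lemma rh_bw: "rh (vv I J, vv (I-1) K) = (vv I J, vv (I+1) (2*J + eps I - K))"
proof -
  have c: "\<not> int n dvd ((I-1) mod int n - I mod int n - 1)" using n_ndvd2 by (simp add: dvd_mod_shift2)
  show ?thesis unfolding rh_def Let_def ci_fst ci_snd fst_conv snd_conv eps_mod using c
    by (auto intro!: vv_cong simp: mod_simps jm2)
qed

end

context cm begin

lemma vv_eq_dvd: "vv I J = vv I' J' \<longleftrightarrow> int n dvd I - I' \<and> int m dvd J - J'"
  by (simp add: vv_eq_iff mod_eq_dvd_iff)

lemma eps_cong: "int n dvd I - I' \<Longrightarrow> eps I = eps I'"
  by (metis eps_mod mod_eq_dvd_iff)

lemma eps_sq: "eps I * eps I = 1" by (simp add: eps_def)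

lemma rh_darts: "d \<in> darts n m \<Longrightarrow> rh d \<in> darts n m"
  by (erule darts_cases) (simp_all add: rh_fw rh_bw fw_dart bw_dart)

lemma rh_fst: "d \<in> darts n m \<Longrightarrow> fst (rh d) = fst d"
  by (erule darts_cases) (simp_all add: rh_fw rh_bw)

lemma rh_inj: "inj_on rh (darts n m)"
proof (rule inj_onI)
  fix d1 d2 assume d1: "d1 \<in> darts n m" and d2: "d2 \<in> darts n m" and e: "rh d1 = rh d2"
  show "d1 = d2"
  proof (cases rule: darts_cases[OF d1])
    case (1 I J K)
    show ?thesis
    proof (cases rule: darts_cases[OF d2])
      case (1 I' J' K')
      with \<open>d1 = _\<close> e have "int n dvd I - I'" "int m dvd J - J'" "int m dvd (2*J - K) - (2*J' - K')"
        by (auto simp: rh_fw vv_eq_dvd)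
      moreover have "K - K' = 2 * (J - J') - ((2*J - K) - (2*J' - K'))" by simp
      ultimately have "int m dvd K - K'" by (metis dvd_diff dvd_mult)
      with \<open>int n dvd I - I'\<close> \<open>int m dvd J - J'\<close> show ?thesis using \<open>d1 = _\<close> 1
        by (simp add: vv_eq_dvd)
    next
      case (2 I' J' K')
      with \<open>d1 = _\<close> e show ?thesis using fw_ne_bw by (simp add: rh_fw rh_bw) (metis fw_ne_bw)
    qed
  next
    case (2 I J K)
    show ?thesis
    proof (cases rule: darts_cases[OF d2])
      case (1 I' J' K')
      with \<open>d1 = _\<close> e show ?thesis using fw_ne_bw by (simp add: rh_fw rh_bw) (metis fw_ne_bw)
    next
      case (2 I' J' K')
      with \<open>d1 = _\<close> e have a: "int n dvd I - I'" "int m dvd J - J'"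
          "int m dvd (2*J + eps I - K) - (2*J' + eps I' - K')"
        by (auto simp: rh_bw vv_eq_dvd)
      from a(1) have "eps I = eps I'" by (rule eps_cong)
      moreover have "K - K' = 2 * (J - J') - ((2*J + eps I - K) - (2*J' + eps I - K'))" by simp
      ultimately have "int m dvd K - K'" using a by (metis dvd_diff dvd_mult)
      with a show ?thesis using \<open>d1 = _\<close> 2
        by (simp add: vv_eq_dvd)
    qed
  qed
qed

lemma darts_fin: "finite (darts n m)"
proof -
  have "darts n m \<subseteq> Vs n m \<times> Vs n m" unfolding darts_def adj_def by auto
  moreover have "finite (Vs n m)" unfolding Vs_def by simp
  ultimately show ?thesis by (meson finite_SigmaI rev_finite_subset)
qed

lemma rh_bij: "bij_betw rh (darts n m) (darts n m)"
proof -
  have "rh ` darts n m \<subseteq> darts n m" using rh_darts by auto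
  then show ?thesis unfolding bij_betw_def using rh_inj darts_fin endo_inj_surj by blast
qed

lemma rh_pow2: "(rh ^^ (2*k)) (vv I J, vv (I+1) K) = (vv I J, vv (I+1) (K + int k * eps I))"
proof (induction k)
  case 0 then show ?case by simp
next
  case (Suc k)
  have "(rh ^^ (2 * Suc k)) (vv I J, vv (I+1) K) = rh (rh ((rh ^^ (2*k)) (vv I J, vv (I+1) K)))"
    by (simp add: mult_2)
  also have "\<dots> = (vv I J, vv (I+1) (K + int (Suc k) * eps I))"
    unfolding Suc rh_fw rh_bw by (simp add: algebra_simps)
  finally show ?case .
qed

lemma fw_reach_fw: "\<exists>k. (rh ^^ k) (vv I J, vv (I+1) K) = (vv I J, vv (I+1) K')"
proof -
  define t where "t = ((K' - K) * eps I) mod int m"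
  have t0: "0 \<le> t" unfolding t_def using mpos by simp
  have "(rh ^^ (2 * nat t)) (vv I J, vv (I+1) K) = (vv I J, vv (I+1) (K + t * eps I))"
    using rh_pow2[of "nat t"] t0 by simp
  also have "vv (I+1) (K + t * eps I) = vv (I+1) K'"
  proof (rule vv_cong_dvd)
    define X where "X = ((K' - K) * eps I) div int m"
    have teq: "t = (K' - K) * eps I - int m * X"
      unfolding t_def X_def by (simp add: minus_div_mult_eq_mod [symmetric])
    have "t * eps I = (K' - K) * (eps I * eps I) - int m * (X * eps I)"
      by (simp add: teq algebra_simps)
    then have "K + t * eps I - K' = int m * (- (X * eps I))"
      using eps_sq[of I] by simp
    then show "int m dvd K + t * eps I - K'" by simp
  qed simp
  finally show ?thesis by blast
qed

lemma fw_reach: 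
  assumes "d' \<in> darts n m" "fst d' = vv I J"
  shows "\<exists>k. (rh ^^ k) (vv I J, vv (I+1) K) = d'"
proof (cases rule: darts_cases[OF assms(1)])
  case (1 I' J' K')
  with assms have "vv I' J' = vv I J" by simp
  then have "int n dvd I' - I" by (simp add: vv_eq_dvd)
  then have "vv (I'+1) K' = vv (I+1) K'" by (intro vv_cong_dvd) simp_all
  then show ?thesis using 1 \<open>vv I' J' = vv I J\<close> fw_reach_fw by simp
next
  case (2 I' J' K')
  with assms have "vv I' J' = vv I J" by simp
  then have "int n dvd I' - I" by (simp add: vv_eq_dvd)
  then have "vv (I'-1) K' = vv (I-1) K'" by (intro vv_cong_dvd) simp_all
  obtain k where k: "(rh ^^ k) (vv I J, vv (I+1) K) = (vv I J, vv (I+1) (2*J - K'))"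
    using fw_reach_fw by blast
  have "(rh ^^ Suc k) (vv I J, vv (I+1) K) = (vv I J, vv (I-1) K')"
    using k by (simp add: rh_fw)
  then show ?thesis using 2 \<open>vv I' J' = vv I J\<close> \<open>vv (I'-1) K' = vv (I-1) K'\<close> by metis
qed

lemma reach:
  assumes "d \<in> darts n m" "d' \<in> darts n m" "fst d = fst d'"
  shows "\<exists>k. (rh ^^ k) d = d'"
proof (cases rule: darts_cases[OF assms(1)])
  case (1 I J K)
  then show ?thesis using fw_reach[OF assms(2), of I J K] assms(3) by simp
next
  case (2 I J K)
  obtain k where "(rh ^^ k) (vv I J, vv (I+1) (2*J + eps I - K)) = d'"
    using fw_reach[OF assms(2), of I J "2*J + eps I - K"] assms(3) 2 by auto
  then have "(rh ^^ Suc k) d = d'" using 2 by (simp add: funpow_Suc_right rh_bw del: funpow.simps)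
  then show ?thesis by blast
qed

lemma rotsys: "rotation_system n m rh"
  unfolding rotation_system_def using rh_bij rh_fst reach by blast

end

context cm begin

definition LF :: "int \<Rightarrow> int \<Rightarrow> int \<Rightarrow> int" where "LF a b I = I div 2 + a * I + b"
definition FFd :: "int \<Rightarrow> int \<Rightarrow> int \<Rightarrow> dart" where
  "FFd a b I = (vv I (LF a b I), vv (I+1) (LF a b (I+1)))"
definition BFd :: "int \<Rightarrow> int \<Rightarrow> int \<Rightarrow> dart" where
  "BFd a b I = (vv I (a*I + b), vv (I-1) (a*(I-1) + b))"

lemma nint: "int n = int m * (2 * int h)" using nh by simp

lemma phi_FF: "phi rh (FFd a b I) = FFd a b (I+1)"
proof -
  have "phi rh (FFd a b I) = rh (vv (I+1) (LF a b (I+1)), vv (I+1-1) (LF a b I))"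
    unfolding phi_def rev_dart_def FFd_def by simp
  also have "\<dots> = (vv (I+1) (LF a b (I+1)), vv (I+1+1) (2 * LF a b (I+1) + eps (I+1) - LF a b I))"
    by (rule rh_bw)
  also have "2 * LF a b (I+1) + eps (I+1) - LF a b I = LF a b (I+1+1)"
    using q_id3[of "I+1"] unfolding LF_def by (simp add: algebra_simps)
  finally show ?thesis unfolding FFd_def by simp
qed

lemma phi_BF: "phi rh (BFd a b I) = BFd a b (I-1)"
proof -
  have "phi rh (BFd a b I) = rh (vv (I-1) (a*(I-1) + b), vv (I-1+1) (a*I + b))"
    unfolding phi_def rev_dart_def BFd_def by simp
  also have "\<dots> = (vv (I-1) (a*(I-1) + b), vv (I-1-1) (2 * (a*(I-1) + b) - (a*I + b)))"
    by (rule rh_fw)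
  also have "2 * (a*(I-1) + b) - (a*I + b) = a*(I-1-1) + b" by (simp add: algebra_simps)
  finally show ?thesis unfolding BFd_def by simp
qed

lemma FF_cong: assumes "int n dvd I - I'" shows "FFd a b I = FFd a b I'"
proof -
  obtain t where t: "I = I' + int n * t" using assms by (metis add.commute diff_add_cancel dvdE)
  have l: "LF a b (X + int n * t) = LF a b X + int m * (int h * t + 2 * a * int h * t)" for X
  proof -
    have e: "X + int n * t = X + 2 * (int m * int h * t)" by (simp add: nint algebra_simps)
    have "(X + int n * t) div 2 = X div 2 + int m * int h * t" unfolding e by simp
    then show ?thesis unfolding LF_def nint by (simp add: algebra_simps)
  qed
  have "vv I (LF a b I) = vv I' (LF a b I')" unfolding t l
    by (rule vv_cong_dvd) simp_all
  moreover have "vv (I+1) (LF a b (I+1)) = vv (I'+1) (LF a b (I'+1))"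
    using l[of "I'+1"] unfolding t by (intro vv_cong_dvd) (simp_all add: algebra_simps)
  ultimately show ?thesis unfolding FFd_def by simp
qed

lemma BF_cong: assumes "int n dvd I - I'" shows "BFd a b I = BFd a b I'"
proof -
  obtain t where t: "I = I' + int n * t" using assms by (metis add.commute diff_add_cancel dvdE)
  have e: "a*(X + int n*t) + b - (a*X + b) = int m * (a * 2 * int h * t)" for X
    by (simp add: nint algebra_simps)
  have e1: "int m dvd (a*(X + int n*t) + b) - (a*X + b)" for X by (simp only: e) simp
  have e2: "int n dvd (X + int n*t) - X" for X by simp
  show ?thesis unfolding BFd_def t
    using e1[of I'] e1[of "I'-1"] e2[of I'] e2[of "I'-1"]
    by (intro arg_cong2[where f=Pair] vv_cong_dvd) (simp_all add: algebra_simps)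
qed

lemma phi_FF_pow: "(phi rh ^^ k) (FFd a b I) = FFd a b (I + int k)"
  by (induction k) (simp_all add: phi_FF algebra_simps)

lemma phi_BF_pow: "(phi rh ^^ k) (BFd a b I) = BFd a b (I - int k)"
  by (induction k) (simp_all add: phi_BF algebra_simps)

lemma dvd_mod_diff: "int n dvd (I' - (I + (I' - I) mod int n))"
proof -
  have "I' - (I + (I' - I) mod int n) = int n * ((I' - I) div int n)"
    by (simp add: minus_mod_eq_mult_div [symmetric] algebra_simps)
  then show ?thesis by simp
qed

lemma face_FF: "face rh (FFd a b I) = range (FFd a b)"
proof
  show "face rh (FFd a b I) \<subseteq> range (FFd a b)"
    unfolding face_def phi_FF_pow by auto
  show "range (FFd a b) \<subseteq> face rh (FFd a b I)"
  proof
    fix x assume "x \<in> range (FFd a b)"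
    then obtain I' where x: "x = FFd a b I'" by auto
    have "x = FFd a b (I + int (nat ((I' - I) mod int n)))"
      unfolding x using npos by (intro FF_cong) (simp add: dvd_mod_diff)
    then show "x \<in> face rh (FFd a b I)" unfolding face_def phi_FF_pow[symmetric] by blast
  qed
qed

lemma dvd_mod_diff2: "int n dvd (I' - (I - (I - I') mod int n))"
proof -
  have "I' - (I - (I - I') mod int n) = - int n * ((I - I') div int n)"
    by (simp add: minus_mod_eq_mult_div [symmetric] algebra_simps)
  then show ?thesis by (metis dvd_triv_left mult_minus_left dvd_minus_iff)
qed

lemma face_BF: "face rh (BFd a b I) = range (BFd a b)"
proof
  show "face rh (BFd a b I) \<subseteq> range (BFd a b)"
    unfolding face_def phi_BF_pow by auto
  show "range (BFd a b) \<subseteq> face rh (BFd a b I)"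
  proof
    fix x assume "x \<in> range (BFd a b)"
    then obtain I' where x: "x = BFd a b I'" by auto
    have "x = BFd a b (I - int (nat ((I - I') mod int n)))"
      unfolding x using npos by (intro BF_cong) (simp add: dvd_mod_diff2)
    then show "x \<in> face rh (BFd a b I)" unfolding face_def phi_BF_pow[symmetric] by blast
  qed
qed

lemma fw_FF: "\<exists>a b. (vv I J, vv (I+1) K) = FFd a b I"
proof -
  define a where "a = K - J - ((I+1) div 2 - I div 2)"
  define b where "b = J - I div 2 - a * I"
  have "LF a b I = J" "LF a b (I+1) = K" unfolding LF_def a_def b_def by (simp_all add: algebra_simps)
  then have "(vv I J, vv (I+1) K) = FFd a b I" unfolding FFd_def by simp
  then show ?thesis by blast
qed

lemma bw_BF: "\<exists>a b. (vv I J, vv (I-1) K) = BFd a b I"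
proof -
  define a where "a = J - K"
  define b where "b = J - a * I"
  have "a * I + b = J" "a * (I - 1) + b = K" unfolding a_def b_def by (simp_all add: algebra_simps)
  then have "(vv I J, vv (I-1) K) = BFd a b I" unfolding BFd_def by simp
  then show ?thesis by blast
qed

lemma faces_cases:
  assumes "F \<in> faces n m rh"
  obtains a b where "F = range (FFd a b)" | a b where "F = range (BFd a b)"
proof -
  obtain d where d: "d \<in> darts n m" "F = face rh d" using assms unfolding faces_def by auto
  show ?thesis
  proof (cases rule: darts_cases[OF d(1)])
    case (1 I J K)
    obtain a b where "(vv I J, vv (I+1) K) = FFd a b I" using fw_FF by blast
    then have "F = range (FFd a b)" using d 1 face_FF by simp
    then show ?thesis by (rule that(1))
  next
    case (2 I J K)
    obtain a b where "(vv I J, vv (I-1) K) = BFd a b I" using bw_BF by blast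
    then have "F = range (BFd a b)" using d 2 face_BF by simp
    then show ?thesis by (rule that(2))
  qed
qed

lemma FF_face: "range (FFd a b) \<in> faces n m rh"
proof -
  have "FFd a b 0 \<in> darts n m" unfolding FFd_def using fw_dart[of 0] by simp
  then show ?thesis unfolding faces_def by (rule image_eqI[rotated]) (simp add: face_FF)
qed
lemma BF_face: "range (BFd a b) \<in> faces n m rh"
proof -
  have "BFd a b 0 \<in> darts n m" unfolding BFd_def using bw_dart[of 0] by simp
  then show ?thesis unfolding faces_def by (rule image_eqI[rotated]) (simp add: face_BF)
qed

lemma fam_card:
  fixes D :: "int \<Rightarrow> dart"
  assumes cong: "\<And>I I'. int n dvd I - I' \<Longrightarrow> D I = D I'"
    and fstD: "\<And>I. \<exists>J. fst (D I) = vv I J"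
  shows "card (range D) = n" and "inj_on fst (range D)"
proof -
  have fi: "int n dvd I - I'" if "fst (D I) = fst (D I')" for I I'
  proof -
    obtain J J' where "fst (D I) = vv I J" "fst (D I') = vv I' J'" using fstD by metis
    then show ?thesis using that by (auto simp: vv_eq_dvd dvd_diff_commute)
  qed
  have r: "range D = D ` {0..<int n}"
  proof
    show "range D \<subseteq> D ` {0..<int n}"
    proof
      fix x assume "x \<in> range D"
      then obtain I where x: "x = D I" by auto
      have "D I = D (I mod int n)" by (rule cong) (simp add: mod_eq_dvd_iff[symmetric])
      moreover have "I mod int n \<in> {0..<int n}" using npos by simp
      ultimately show "x \<in> D ` {0..<int n}" using x by blast
    qed
  qed auto
  have "inj_on D {0..<int n}"
  proof (rule inj_onI)
    fix I I' assume "I \<in> {0..<int n}" "I' \<in> {0..<int n}" "D I = D I'"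
    then have "int n dvd I - I'" using fi by simp
    then have "I mod int n = I' mod int n" by (simp add: mod_eq_dvd_iff)
    then show "I = I'" using \<open>I \<in> _\<close> \<open>I' \<in> _\<close> by simp
  qed
  then show "card (range D) = n" unfolding r by (simp add: card_image)
  show "inj_on fst (range D)"
  proof (rule inj_onI)
    fix x y assume "x \<in> range D" "y \<in> range D" "fst x = fst y"
    then obtain I I' where "x = D I" "y = D I'" by auto
    then show "x = y" using fi cong \<open>fst x = fst y\<close> by metis
  qed
qed

lemma FF_props: "card (range (FFd a b)) = n" "inj_on fst (range (FFd a b))"
  using fam_card[of "FFd a b"] FF_cong unfolding FFd_def by auto
lemma BF_props: "card (range (BFd a b)) = n" "inj_on fst (range (BFd a b))"
  using fam_card[of "BFd a b"] BF_cong unfolding BFd_def by auto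

lemma face_card: "F \<in> faces n m rh \<Longrightarrow> card F = n"
  by (erule faces_cases) (simp_all add: FF_props BF_props)

lemma face_self: "d \<in> face rh d"
  unfolding face_def by (rule CollectI, rule exI[of _ 0]) simp

lemma polyt: "polytopal n m rh"
  unfolding polytopal_def
proof (intro conjI ballI)
  fix F assume F: "F \<in> faces n m rh"
  show "inj_on fst F" by (rule faces_cases[OF F]) (simp_all add: FF_props BF_props)
  show "3 \<le> card F" using face_card[OF F] n6 by simp
next
  fix d assume d: "d \<in> darts n m"
  show "face rh d \<noteq> face rh (rev_dart d)"
  proof (cases rule: darts_cases[OF d])
    case (1 I J K)
    obtain a b where e: "d = FFd a b I" using fw_FF[of I J K] 1 by blast
    have "rev_dart d \<notin> range (FFd a b)"
    proof
      assume "rev_dart d \<in> range (FFd a b)"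
      then obtain I' where "(vv (I+1) K, vv I J) = FFd a b I'" using 1 unfolding rev_dart_def by auto
      then have "int n dvd (I+1) - I'" "int n dvd I - (I'+1)" unfolding FFd_def by (auto simp: vv_eq_dvd)
      then have "int n dvd ((I+1) - I') - (I - (I'+1))" by (rule dvd_diff)
      then show False using n_ndvd2 by simp
    qed
    then show ?thesis using face_self[of "rev_dart d"] face_FF[of a b I] e by auto
  next
    case (2 I J K)
    obtain a b where e: "d = BFd a b I" using bw_BF[of I J K] 2 by blast
    have "rev_dart d \<notin> range (BFd a b)"
    proof
      assume "rev_dart d \<in> range (BFd a b)"
      then obtain I' where "(vv (I-1) K, vv I J) = BFd a b I'" using 2 unfolding rev_dart_def by auto
      then have "int n dvd (I-1) - I'" "int n dvd I - (I'-1)" unfolding BFd_def by (auto simp: vv_eq_dvd)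
      then have "int n dvd ((I-1) - I') - (I - (I'-1))" by (rule dvd_diff)
      then show False using n_ndvd2 by simp
    qed
    then show ?thesis using face_self[of "rev_dart d"] face_BF[of a b I] e by auto
  qed
qed

end

context cm begin

definition Gm :: "int \<Rightarrow> int \<Rightarrow> int \<Rightarrow> int \<Rightarrow> int \<Rightarrow> int \<Rightarrow> vtx \<Rightarrow> vtx" where
  "Gm e a s tau al be x = (if x \<in> Vs n m then
     vv (a + e * ci (fst x)) (s * ci (snd x) + tau * (ci (fst x) div 2) + al * ci (fst x) + be) else x)"

lemma Gm_vv: "Gm e a s tau al be (vv I J) = vv (a + e * I) (s * J + tau * (I div 2) + al * I + be)"
proof -
  define u where "u = I div int n"
  define w where "w = J div int m"
  have I: "I mod int n = I - int n * u" unfolding u_def by (simp add: minus_div_mult_eq_mod [symmetric] algebra_simps)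
  have J: "J mod int m = J - int m * w" unfolding w_def by (simp add: minus_div_mult_eq_mod [symmetric] algebra_simps)
  have e2: "I - int n * u = I + 2 * (- (int m * int h * u))" by (simp add: nint algebra_simps)
  have d2: "(I - int n * u) div 2 = I div 2 - int m * int h * u" unfolding e2 by simp
  have "Gm e a s tau al be (vv I J) = vv (a + e * (I - int n * u)) (s * (J - int m * w) + tau * ((I - int n * u) div 2) + al * (I - int n * u) + be)"
    unfolding Gm_def using vv_in[of I J] by (simp add: ci_fst ci_snd I J)
  also have "\<dots> = vv (a + e * I) (s * J + tau * (I div 2) + al * I + be)"
  proof (rule vv_cong_dvd)
    show "int n dvd a + e * (I - int n * u) - (a + e * I)"
      by (simp add: algebra_simps)
    have "s * (J - int m * w) + tau * ((I - int n * u) div 2) + al * (I - int n * u) + be - (s * J + tau * (I div 2) + al * I + be)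
        = int m * (- s * w - tau * int h * u - al * 2 * int h * u)"
      unfolding d2 by (simp add: nint algebra_simps)
    then show "int m dvd s * (J - int m * w) + tau * ((I - int n * u) div 2) + al * (I - int n * u) + be - (s * J + tau * (I div 2) + al * I + be)"
      by simp
  qed
  finally show ?thesis .
qed

lemma vv_eqI: "I = I' \<Longrightarrow> J = J' \<Longrightarrow> vv I J = vv I' J'" by simp

lemma Gm_out: "x \<notin> Vs n m \<Longrightarrow> Gm e a s tau al be x = x"
  unfolding Gm_def by simp

lemma Gm_Vs: "x \<in> Vs n m \<Longrightarrow> Gm e a s tau al be x \<in> Vs n m"
  unfolding Gm_def by (simp add: vv_in)

lemma unit_dvd: assumes "e * e = (1::int)" "k dvd e * x" shows "k dvd x"
proof -
  have "k dvd e * (e * x)" using assms(2) by (metis dvd_mult)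
  then show ?thesis using assms(1) by (simp add: mult.assoc[symmetric])
qed

lemma Gm_inj:
  assumes e: "e * e = 1" and s: "s * s = 1"
  shows "inj_on (Gm e a s tau al be) (Vs n m)"
proof (rule inj_onI)
  fix x y assume x: "x \<in> Vs n m" and y: "y \<in> Vs n m" and eq: "Gm e a s tau al be x = Gm e a s tau al be y"
  obtain I J where xI: "x = vv I J" using Vs_ex x by blast
  obtain I' J' where yI: "y = vv I' J'" using Vs_ex y by blast
  from eq have "int n dvd (a + e * I) - (a + e * I')" unfolding xI yI Gm_vv vv_eq_dvd by simp
  moreover have "(a + e * I) - (a + e * I') = e * (I - I')" by (simp add: algebra_simps)
  ultimately have "int n dvd e * (I - I')" by simp
  then have dI: "int n dvd I - I'" using unit_dvd[OF e] by blast
  then have y2: "y = vv I J'" unfolding yI by (intro vv_cong_dvd) (simp_all add: dvd_diff_commute)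
  from eq have "int m dvd (s * J + tau * (I div 2) + al * I + be) - (s * J' + tau * (I div 2) + al * I + be)"
    unfolding xI y2 Gm_vv vv_eq_dvd by simp
  moreover have "(s * J + tau * (I div 2) + al * I + be) - (s * J' + tau * (I div 2) + al * I + be) = s * (J - J')"
    by (simp add: algebra_simps)
  ultimately have "int m dvd s * (J - J')" by simp
  then have "int m dvd J - J'" using unit_dvd[OF s] by blast
  then show "x = y" unfolding xI y2 by (intro vv_cong_dvd) simp_all
qed

lemma Vs_fin: "finite (Vs n m)" unfolding Vs_def by simp

lemma Gm_bij:
  assumes "e * e = 1" "s * s = 1"
  shows "bij_betw (Gm e a s tau al be) (Vs n m) (Vs n m)"
proof -
  have "Gm e a s tau al be ` Vs n m \<subseteq> Vs n m" using Gm_Vs by auto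
  then have "Gm e a s tau al be ` Vs n m = Vs n m" by (rule endo_inj_surj[OF Vs_fin _ Gm_inj[OF assms]])
  then show ?thesis unfolding bij_betw_def using Gm_inj[OF assms] by simp
qed

lemma adj_Vs: "adj n m x y \<Longrightarrow> x \<in> Vs n m \<and> y \<in> Vs n m" unfolding adj_def by simp

lemma Gm_adj:
  assumes e: "e = 1 \<or> e = -1"
  shows "adj n m x y \<longleftrightarrow> adj n m (Gm e a s tau al be x) (Gm e a s tau al be y)"
proof (cases "x \<in> Vs n m \<and> y \<in> Vs n m")
  case True
  obtain I J where xI: "x = vv I J" using Vs_ex True by blast
  obtain I' J' where yI: "y = vv I' J'" using Vs_ex True by blast
  have "(int n dvd (I' - I - 1) \<or> int n dvd (I' - I + 1)) \<longleftrightarrow>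
        (int n dvd (a + e * I' - (a + e * I) - 1) \<or> int n dvd (a + e * I' - (a + e * I) + 1))"
  proof (cases "e = 1")
    case True then show ?thesis by simp
  next
    case False
    then have e': "e = -1" using e by simp
    have "a + e * I' - (a + e * I) - 1 = - (I' - I + 1)" "a + e * I' - (a + e * I) + 1 = - (I' - I - 1)"
      unfolding e' by simp_all
    then show ?thesis by (simp only: dvd_minus_iff) blast
  qed
  then show ?thesis unfolding xI yI Gm_vv adj_vv .
next
  case False
  then have "\<not> adj n m x y" using adj_Vs by blast
  moreover have "\<not> adj n m (Gm e a s tau al be x) (Gm e a s tau al be y)"
  proof
    assume "adj n m (Gm e a s tau al be x) (Gm e a s tau al be y)"
    then have "Gm e a s tau al be x \<in> Vs n m" "Gm e a s tau al be y \<in> Vs n m" using adj_Vs by blast+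
    then show False using False Gm_out[of x e a s tau al be] Gm_out[of y e a s tau al be] by auto
  qed
  ultimately show ?thesis by simp
qed

lemma eps_odd: "odd a \<Longrightarrow> eps (a + I) = - eps I" unfolding eps_def by auto
lemma eps_even: "even a \<Longrightarrow> eps (a - I) = eps I" unfolding eps_def by auto
lemma eps_neg: "eps (- I) = eps I" unfolding eps_def by auto

lemma gd_fw: "gd (Gm e a s tau al be) (vv I J, vv I' K) =
   (vv (a + e * I) (s * J + tau * (I div 2) + al * I + be), vv (a + e * I') (s * K + tau * (I' div 2) + al * I' + be))"
  unfolding gd_def by (simp add: Gm_vv)

lemma orient_P1:
  assumes a: "odd a"
  shows "orient_pres n m rh (Gm 1 a (-1) 0 al be)"
  unfolding orient_pres_def
proof
  fix d assume d: "d \<in> darts n m"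
  let ?G = "Gm 1 a (-1) 0 al be"
  show "rh (gd ?G d) = gd ?G (rh d)"
  proof (cases rule: darts_cases[OF d])
    case (1 I J K)
    have g: "gd ?G d = (vv (a + I) (- J + al * I + be), vv (a + I + 1) (- K + al * (I + 1) + be))"
      unfolding 1 gd_fw by (intro arg_cong2[where f=Pair] vv_eqI) (simp_all add: algebra_simps)
    have "rh (gd ?G d) = (vv (a + I) (- J + al * I + be), vv (a + I - 1) (2 * (- J + al * I + be) - (- K + al * (I + 1) + be)))"
      unfolding g by (rule rh_fw)
    also have "\<dots> = gd ?G (rh d)"
      unfolding 1 rh_fw gd_fw by (intro arg_cong2[where f=Pair] vv_eqI) (simp_all add: algebra_simps)
    finally show ?thesis .
  next
    case (2 I J K)
    have g: "gd ?G d = (vv (a + I) (- J + al * I + be), vv (a + I - 1) (- K + al * (I - 1) + be))"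
      unfolding 2 gd_fw by (intro arg_cong2[where f=Pair] vv_eqI) (simp_all add: algebra_simps)
    have "rh (gd ?G d) = (vv (a + I) (- J + al * I + be), vv (a + I + 1) (2 * (- J + al * I + be) + eps (a + I) - (- K + al * (I - 1) + be)))"
      unfolding g by (rule rh_bw)
    also have "\<dots> = gd ?G (rh d)"
      unfolding 2 rh_bw gd_fw eps_odd[OF a] by (intro arg_cong2[where f=Pair] vv_eqI) (simp_all add: algebra_simps)
    finally show ?thesis .
  qed
qed

lemma orient_P2:
  assumes a: "even a"
  shows "orient_pres n m rh (Gm (-1) a (-1) 1 al be)"
  unfolding orient_pres_def
proof
  fix d assume d: "d \<in> darts n m"
  let ?G = "Gm (-1) a (-1) 1 al be"
  show "rh (gd ?G d) = gd ?G (rh d)"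
  proof (cases rule: darts_cases[OF d])
    case (1 I J K)
    have g: "gd ?G d = (vv (a - I) (- J + I div 2 + al * I + be), vv (a - I - 1) (- K + (I + 1) div 2 + al * (I + 1) + be))"
      unfolding 1 gd_fw by (intro arg_cong2[where f=Pair] vv_eqI) (simp_all add: algebra_simps)
    have "rh (gd ?G d) = (vv (a - I) (- J + I div 2 + al * I + be), vv (a - I + 1) (2 * (- J + I div 2 + al * I + be) + eps (a - I) - (- K + (I + 1) div 2 + al * (I + 1) + be)))"
      unfolding g by (rule rh_bw)
    also have "\<dots> = (vv (a - I) (- J + I div 2 + al * I + be), vv (a - I + 1) (- (2 * J - K) + (I - 1) div 2 + al * (I - 1) + be))"
      using q_id3[of I] unfolding eps_even[OF a] by (intro arg_cong2[where f=Pair] vv_eqI) (simp_all add: algebra_simps)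
    also have "\<dots> = gd ?G (rh d)"
      unfolding 1 rh_fw gd_fw by (intro arg_cong2[where f=Pair] vv_eqI) (simp_all add: algebra_simps)
    finally show ?thesis .
  next
    case (2 I J K)
    have g: "gd ?G d = (vv (a - I) (- J + I div 2 + al * I + be), vv (a - I + 1) (- K + (I - 1) div 2 + al * (I - 1) + be))"
      unfolding 2 gd_fw by (intro arg_cong2[where f=Pair] vv_eqI) (simp_all add: algebra_simps)
    have "rh (gd ?G d) = (vv (a - I) (- J + I div 2 + al * I + be), vv (a - I - 1) (2 * (- J + I div 2 + al * I + be) - (- K + (I - 1) div 2 + al * (I - 1) + be)))"
      unfolding g by (rule rh_fw)
    also have "\<dots> = (vv (a - I) (- J + I div 2 + al * I + be), vv (a - I - 1) (- (2 * J + eps I - K) + (I + 1) div 2 + al * (I + 1) + be))"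
      using q_id3[of I] by (intro arg_cong2[where f=Pair] vv_eqI) (simp_all add: algebra_simps)
    also have "\<dots> = gd ?G (rh d)"
      unfolding 2 rh_bw gd_fw by (intro arg_cong2[where f=Pair] vv_eqI) (simp_all add: algebra_simps)
    finally show ?thesis .
  qed
qed

lemma orient_R: "orient_rev n m rh (Gm (-1) 0 1 0 al be)"
  unfolding orient_rev_def
proof
  fix d assume d: "d \<in> darts n m"
  let ?G = "Gm (-1) 0 1 0 al be"
  show "rh (gd ?G (rh d)) = gd ?G d"
  proof (cases rule: darts_cases[OF d])
    case (1 I J K)
    have g: "gd ?G (rh d) = (vv (- I) (J + al * I + be), vv (- I + 1) (2 * J - K + al * (I - 1) + be))"
      unfolding 1 rh_fw gd_fw by (intro arg_cong2[where f=Pair] vv_eqI) (simp_all add: algebra_simps)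
    have "rh (gd ?G (rh d)) = (vv (- I) (J + al * I + be), vv (- I - 1) (2 * (J + al * I + be) - (2 * J - K + al * (I - 1) + be)))"
      unfolding g by (rule rh_fw)
    also have "\<dots> = gd ?G d"
      unfolding 1 gd_fw by (intro arg_cong2[where f=Pair] vv_eqI) (simp_all add: algebra_simps)
    finally show ?thesis .
  next
    case (2 I J K)
    have g: "gd ?G (rh d) = (vv (- I) (J + al * I + be), vv (- I - 1) (2 * J + eps I - K + al * (I + 1) + be))"
      unfolding 2 rh_bw gd_fw by (intro arg_cong2[where f=Pair] vv_eqI) (simp_all add: algebra_simps)
    have "rh (gd ?G (rh d)) = (vv (- I) (J + al * I + be), vv (- I + 1) (2 * (J + al * I + be) + eps (- I) - (2 * J + eps I - K + al * (I + 1) + be)))"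
      unfolding g by (rule rh_bw)
    also have "\<dots> = gd ?G d"
      unfolding 2 gd_fw eps_neg by (intro arg_cong2[where f=Pair] vv_eqI) (simp_all add: algebra_simps)
    finally show ?thesis .
  qed
qed

lemma Gm_aut_pres:
  assumes "e = 1 \<or> e = -1" "s = 1 \<or> s = -1" "orient_pres n m rh (Gm e a s tau al be)"
  shows "map_aut n m rh (Gm e a s tau al be)"
proof -
  have "e * e = 1" "s * s = 1" using assms(1,2) by auto
  then have "bij_betw (Gm e a s tau al be) (Vs n m) (Vs n m)" by (rule Gm_bij)
  moreover have "\<forall>x. x \<notin> Vs n m \<longrightarrow> Gm e a s tau al be x = x" using Gm_out by blast
  moreover have "\<forall>x y. adj n m x y \<longleftrightarrow> adj n m (Gm e a s tau al be x) (Gm e a s tau al be y)"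
    using Gm_adj[OF assms(1)] by blast
  ultimately show ?thesis unfolding map_aut_def using assms(3) by blast
qed

lemma Gm_aut_rev:
  assumes "e = 1 \<or> e = -1" "s = 1 \<or> s = -1" "orient_rev n m rh (Gm e a s tau al be)"
  shows "map_aut n m rh (Gm e a s tau al be)"
proof -
  have "e * e = 1" "s * s = 1" using assms(1,2) by auto
  then have "bij_betw (Gm e a s tau al be) (Vs n m) (Vs n m)" by (rule Gm_bij)
  moreover have "\<forall>x. x \<notin> Vs n m \<longrightarrow> Gm e a s tau al be x = x" using Gm_out by blast
  moreover have "\<forall>x y. adj n m x y \<longleftrightarrow> adj n m (Gm e a s tau al be x) (Gm e a s tau al be y)"
    using Gm_adj[OF assms(1)] by blast
  ultimately show ?thesis unfolding map_aut_def using assms(3) by blast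
qed

end

context cm begin

lemma not_both:
  assumes e: "e * e = 1" and s: "s * s = 1"
    and r: "orient_rev n m rh (Gm e a s tau al be)"
  shows "\<not> orient_pres n m rh (Gm e a s tau al be)"
proof
  let ?G = "Gm e a s tau al be"
  assume p: "orient_pres n m rh ?G"
  define d where "d = (vv 0 0, vv (0+1) 0)"
  have d: "d \<in> darts n m" unfolding d_def by (rule fw_dart)
  have rd: "rh d \<in> darts n m" using rh_darts[OF d] .
  have "rh (gd ?G (rh d)) = gd ?G d" using r d unfolding orient_rev_def by blast
  moreover have "rh (gd ?G (rh d)) = gd ?G (rh (rh d))" using p rd unfolding orient_pres_def by blast
  ultimately have eq: "gd ?G (rh (rh d)) = gd ?G d" by simp
  have "rh (rh d) = (vv 0 0, vv 1 (-1))" unfolding d_def rh_fw using rh_bw[of 0 0] by (simp add: eps_def)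
  then have "?G (vv 1 (-1)) = ?G (vv 1 0)" using eq unfolding d_def gd_def by simp
  then have "vv 1 (-1) = vv 1 0" using Gm_inj[OF e s] vv_in by (meson inj_onD)
  then have "int m dvd -1" by (simp add: vv_eq_dvd)
  then show False using m3 by simp
qed

definition val :: "int \<Rightarrow> int" where "val I0 = - ((I0 + 1) div 2 - I0 div 2)"
definition vbe :: "int \<Rightarrow> int \<Rightarrow> int" where "vbe I0 J0 = 2 * J0 - I0 div 2 - val I0 * I0"
definition vrot :: "int \<Rightarrow> int \<Rightarrow> vtx \<Rightarrow> vtx" where
  "vrot I0 J0 = Gm (-1) (2 * I0) (-1) 1 (val I0) (vbe I0 J0)"

lemma vrot_aut: "map_aut n m rh (vrot I0 J0)"
  unfolding vrot_def by (rule Gm_aut_pres) (simp_all add: orient_P2)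

lemma vrot_fix: "vrot I0 J0 (vv I0 J0) = vv I0 J0"
  unfolding vrot_def Gm_vv vbe_def by (rule vv_eqI) (simp_all add: algebra_simps)

lemma darts_at:
  assumes "d \<in> darts n m" "fst d = vv I0 J0"
  obtains K where "d = (vv I0 J0, vv (I0+1) K)" | K where "d = (vv I0 J0, vv (I0-1) K)"
proof (cases rule: darts_cases[OF assms(1)])
  case (1 I J K)
  then have "vv I J = vv I0 J0" using assms by simp
  then have "int n dvd I - I0" by (simp add: vv_eq_dvd)
  then have "vv (I+1) K = vv (I0+1) K" by (intro vv_cong_dvd) simp_all
  then show ?thesis using 1 \<open>vv I J = vv I0 J0\<close> that(1) by simp
next
  case (2 I J K)
  then have "vv I J = vv I0 J0" using assms by simp
  then have "int n dvd I - I0" by (simp add: vv_eq_dvd)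
  then have "vv (I-1) K = vv (I0-1) K" by (intro vv_cong_dvd) simp_all
  then show ?thesis using 2 \<open>vv I J = vv I0 J0\<close> that(2) by simp
qed

lemma vrot_acts:
  assumes "d \<in> darts n m" "fst d = vv I0 J0"
  shows "vrot I0 J0 (snd d) = snd (rh d)"
proof (cases rule: darts_at[OF assms])
  case (1 K)
  have "vrot I0 J0 (vv (I0+1) K) = vv (I0 - 1) (2 * J0 - K)"
    unfolding vrot_def Gm_vv vbe_def val_def by (rule vv_eqI) (simp_all add: algebra_simps)
  then show ?thesis unfolding 1 rh_fw by simp
next
  case (2 K)
  have "vrot I0 J0 (vv (I0-1) K) = vv (I0 + 1) (2 * J0 + eps I0 - K)"
    unfolding vrot_def Gm_vv vbe_def val_def using q_id3[of I0]
    by (intro vv_eqI) (simp_all add: algebra_simps)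
  then show ?thesis unfolding 2 rh_bw by simp
qed

lemma acts_pow:
  assumes act: "\<And>d. d \<in> darts n m \<Longrightarrow> fst d = v \<Longrightarrow> g (snd d) = snd (rh d)"
    and w: "(v, w) \<in> darts n m"
  shows "(rh ^^ k) (v, w) = (v, (g ^^ k) w)"
proof (induction k)
  case 0 then show ?case by simp
next
  case (Suc k)
  have dk: "(v, (g ^^ k) w) \<in> darts n m"
  proof -
    have "(rh ^^ k) (v, w) \<in> darts n m"
      by (induction k) (simp_all add: w rh_darts)
    then show ?thesis using Suc by simp
  qed
  have "(rh ^^ Suc k) (v, w) = rh (v, (g ^^ k) w)" using Suc by simp
  also have "\<dots> = (v, g ((g ^^ k) w))"
    using rh_fst[OF dk] act[OF dk] by (metis fst_conv snd_conv prod.collapse)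
  finally show ?case by simp
qed

lemma vertex_rot:
  assumes v: "v \<in> Vs n m"
  shows "\<exists>g. map_aut n m rh g \<and> g v = v \<and> (\<forall>w w'. adj n m v w \<longrightarrow> adj n m v w' \<longrightarrow> (\<exists>k. (g ^^ k) w = w'))"
proof -
  obtain I0 J0 where vI: "v = vv I0 J0" using Vs_ex v by blast
  let ?g = "vrot I0 J0"
  have "\<forall>w w'. adj n m v w \<longrightarrow> adj n m v w' \<longrightarrow> (\<exists>k. (?g ^^ k) w = w')"
  proof (intro allI impI)
    fix w w' assume a: "adj n m v w" "adj n m v w'"
    then have dw: "(v, w) \<in> darts n m" "(v, w') \<in> darts n m" unfolding darts_def by auto
    obtain k where "(rh ^^ k) (v, w) = (v, w')" using reach[OF dw] by auto
    moreover have "(rh ^^ k) (v, w) = (v, (?g ^^ k) w)"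
      by (rule acts_pow[OF _ dw(1)]) (use vrot_acts vI in auto)
    ultimately show "\<exists>k. (?g ^^ k) w = w'" by auto
  qed
  then show ?thesis using vrot_aut vrot_fix vI by blast
qed

lemma fam_pow:
  assumes st: "\<And>I. g (fst (D I)) = fst (D (I + dl))" "\<And>I. g (snd (D I)) = snd (D (I + dl))"
  shows "(g ^^ k) (fst (D I)) = fst (D (I + int k * dl)) \<and> (g ^^ k) (snd (D I)) = snd (D (I + int k * dl))"
proof (induction k)
  case 0 then show ?case by simp
next
  case (Suc k)
  then show ?case using st[of "I + int k * dl"] by (simp add: algebra_simps)
qed

lemma fam_reach:
  fixes D :: "int \<Rightarrow> dart"
  assumes cong: "\<And>I I'. int n dvd I - I' \<Longrightarrow> D I = D I'"
    and st: "\<And>I. g (fst (D I)) = fst (D (I + dl))" "\<And>I. g (snd (D I)) = snd (D (I + dl))"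
    and dl: "dl * dl = 1"
  shows "\<exists>k. (g ^^ k) (fst (D I1)) = fst (D I2) \<and> (g ^^ k) (snd (D I1)) = snd (D I2)"
proof -
  define t where "t = ((I2 - I1) * dl) mod int n"
  define X where "X = ((I2 - I1) * dl) div int n"
  have t0: "0 \<le> t" unfolding t_def using npos by simp
  have teq: "t = (I2 - I1) * dl - int n * X"
    unfolding t_def X_def by (simp add: minus_div_mult_eq_mod [symmetric])
  have "t * dl = (I2 - I1) * (dl * dl) - int n * (X * dl)" by (simp add: teq algebra_simps)
  then have "I1 + t * dl - I2 = int n * (- (X * dl))" using dl by simp
  then have "D (I1 + int (nat t) * dl) = D I2" using t0 by (intro cong) simp
  then show ?thesis using fam_pow[where g=g and D=D and dl=dl, OF st, of "nat t" I1] by metis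
qed

lemma fam_rot:
  fixes D :: "int \<Rightarrow> dart"
  assumes cong: "\<And>I I'. int n dvd I - I' \<Longrightarrow> D I = D I'"
    and ag: "map_aut n m rh g" and op: "orient_pres n m rh g"
    and st: "\<And>I. gd g (D I) = D (I + dl)"
    and dl: "dl * dl = 1"
  shows "map_aut n m rh g \<and> face_image n m rh g (range D) = range D \<and>
        (\<forall>x\<in>fst ` range D. \<forall>y\<in>fst ` range D. \<exists>k. (g ^^ k) x = y) \<and>
        (\<forall>d\<in>range D. \<forall>d'\<in>range D. \<exists>k. {(g ^^ k) (fst d), (g ^^ k) (snd d)} = {fst d', snd d'})"
proof -
  have st1: "g (fst (D I)) = fst (D (I + dl))" "g (snd (D I)) = snd (D (I + dl))" for I
    using st[of I] unfolding gd_def by (metis fst_conv snd_conv)+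
  have fi: "face_image n m rh g (range D) = range D"
  proof -
    have "gd g ` range D = range D"
    proof
      show "gd g ` range D \<subseteq> range D" using st by auto
      show "range D \<subseteq> gd g ` range D"
      proof
        fix x assume "x \<in> range D"
        then obtain I where "x = D I" by auto
        then have "x = gd g (D (I - dl))" using st[of "I - dl"] by simp
        then show "x \<in> gd g ` range D" by blast
      qed
    qed
    then show ?thesis unfolding face_image_def using op by simp
  qed
  have "\<forall>x\<in>fst ` range D. \<forall>y\<in>fst ` range D. \<exists>k. (g ^^ k) x = y"
  proof (intro ballI)
    fix x y assume "x \<in> fst ` range D" "y \<in> fst ` range D"
    then obtain I1 I2 where "x = fst (D I1)" "y = fst (D I2)" by auto
    then show "\<exists>k. (g ^^ k) x = y" using fam_reach[where g=g and D=D and dl=dl, OF cong st1 dl, of I1 I2] by metis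
  qed
  moreover have "\<forall>d\<in>range D. \<forall>d'\<in>range D. \<exists>k. {(g ^^ k) (fst d), (g ^^ k) (snd d)} = {fst d', snd d'}"
  proof (intro ballI)
    fix d d' assume "d \<in> range D" "d' \<in> range D"
    then obtain I1 I2 where "d = D I1" "d' = D I2" by auto
    then show "\<exists>k. {(g ^^ k) (fst d), (g ^^ k) (snd d)} = {fst d', snd d'}"
      using fam_reach[where g=g and D=D and dl=dl, OF cong st1 dl, of I1 I2] by metis
  qed
  ultimately show ?thesis using ag fi by blast
qed

lemma fam_refl:
  fixes D :: "int \<Rightarrow> dart"
  assumes ag: "map_aut n m rh g" and np: "\<not> orient_pres n m rh g"
    and st: "\<And>I. rev_dart (gd g (D I)) = D (c - I)"
  shows "map_aut n m rh g \<and> face_image n m rh g (range D) = range D \<and>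
        (\<forall>d\<in>range D. rev_dart (gd g d) \<in> range D)"
proof -
  have "rev_dart ` gd g ` range D = range D"
  proof
    show "rev_dart ` gd g ` range D \<subseteq> range D" using st by auto
    show "range D \<subseteq> rev_dart ` gd g ` range D"
    proof
      fix x assume "x \<in> range D"
      then obtain I where "x = D I" by auto
      then have "x = rev_dart (gd g (D (c - I)))" using st[of "c - I"] by simp
      then show "x \<in> rev_dart ` gd g ` range D" by blast
    qed
  qed
  then show ?thesis unfolding face_image_def using np ag st by auto
qed

lemma FF_rot_st: "gd (Gm 1 1 (-1) 0 (1 + 2*a) (a + 2*b)) (FFd a b I) = FFd a b (I + 1)"
proof -
  have "I div 2 + (I+1) div 2 = I" "(I+1) div 2 + (I+1+1) div 2 = I + 1" using q_id1[of I] q_id1[of "I+1"] by simp_all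
  then show ?thesis unfolding FFd_def gd_def fst_conv snd_conv Gm_vv LF_def
    by (intro arg_cong2[where f=Pair] vv_eqI) (simp_all add: algebra_simps)
qed

lemma BF_rot_st: "gd (Gm 1 (-1) (-1) 0 (2*a) (2*b - a)) (BFd a b I) = BFd a b (I + -1)"
  unfolding BFd_def gd_def fst_conv snd_conv Gm_vv
  by (intro arg_cong2[where f=Pair] vv_eqI) (simp_all add: algebra_simps)

lemma FF_refl_st: "rev_dart (gd (Gm (-1) 0 1 0 (-1 - 2*a) 0) (FFd a b I)) = FFd a b (-1 - I)"
proof -
  have q: "(- X) div 2 = X div 2 - X" for X :: int using q_id1[of X] q_id2[of X] by simp
  show ?thesis unfolding FFd_def gd_def rev_dart_def fst_conv snd_conv Gm_vv LF_def using q[of I] q[of "I+1"]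
    by (intro arg_cong2[where f=Pair] vv_eqI) (simp_all add: algebra_simps)
qed

lemma BF_refl_st: "rev_dart (gd (Gm (-1) 0 1 0 (-2*a) 0) (BFd a b I)) = BFd a b (1 - I)"
  unfolding BFd_def gd_def rev_dart_def fst_conv snd_conv Gm_vv
  by (intro arg_cong2[where f=Pair] vv_eqI) (simp_all add: algebra_simps)

lemma face_rot:
  assumes F: "F \<in> faces n m rh"
  shows "\<exists>g. map_aut n m rh g \<and> face_image n m rh g F = F \<and>
        (\<forall>x\<in>fst ` F. \<forall>y\<in>fst ` F. \<exists>k. (g ^^ k) x = y) \<and>
        (\<forall>d\<in>F. \<forall>d'\<in>F. \<exists>k. {(g ^^ k) (fst d), (g ^^ k) (snd d)} = {fst d', snd d'})"
proof (cases rule: faces_cases[OF F])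
  case (1 a b)
  let ?g = "Gm 1 1 (-1) 0 (1 + 2*a) (a + 2*b)"
  have ag: "map_aut n m rh ?g" by (rule Gm_aut_pres) (simp_all add: orient_P1)
  have op: "orient_pres n m rh ?g" by (simp add: orient_P1)
  have dl: "(1::int) * 1 = 1" by simp
  show ?thesis unfolding 1 using fam_rot[where D="FFd a b" and g="?g" and dl=1, OF FF_cong ag op FF_rot_st dl] by blast
next
  case (2 a b)
  let ?g = "Gm 1 (-1) (-1) 0 (2*a) (2*b - a)"
  have ag: "map_aut n m rh ?g" by (rule Gm_aut_pres) (simp_all add: orient_P1)
  have op: "orient_pres n m rh ?g" by (simp add: orient_P1)
  have dl: "(-1::int) * -1 = 1" by simp
  show ?thesis unfolding 2 using fam_rot[where D="BFd a b" and g="?g" and dl="-1", OF BF_cong ag op BF_rot_st dl] by blast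
qed

lemma face_refl:
  assumes F: "F \<in> faces n m rh"
  shows "\<exists>g. map_aut n m rh g \<and> face_image n m rh g F = F \<and> (\<forall>d\<in>F. rev_dart (gd g d) \<in> F)"
proof -
  have R: "map_aut n m rh (Gm (-1) 0 1 0 al 0) \<and> \<not> orient_pres n m rh (Gm (-1) 0 1 0 al 0)" for al
  proof
    show "map_aut n m rh (Gm (-1) 0 1 0 al 0)" by (rule Gm_aut_rev) (simp_all add: orient_R)
    show "\<not> orient_pres n m rh (Gm (-1) 0 1 0 al 0)" by (rule not_both) (simp_all add: orient_R)
  qed
  show ?thesis
  proof (cases rule: faces_cases[OF F])
    case (1 a b)
    show ?thesis unfolding 1 using fam_refl[where D="FFd a b" and g="Gm (-1) 0 1 0 (-1 - 2*a) 0" and c="-1", OF _ _ FF_refl_st] R by blast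
  next
    case (2 a b)
    show ?thesis unfolding 2 using fam_refl[where D="BFd a b" and g="Gm (-1) 0 1 0 (-2*a) 0" and c=1, OF _ _ BF_refl_st] R by blast
  qed
qed

lemma rotary_rh: "rotary n m rh"
  unfolding rotary_def using vertex_rot face_rot by blast

lemma reflexible_rh: "reflexible n m rh"
  unfolding reflexible_def using rotary_rh face_refl by blast

end

lemma perm_form:
  assumes "1 \<le> j" "j \<le> M"
  shows "(if j = 1 then 1 else M - j + 2) = nat ((1 - int j) mod int M) + 1"
proof (cases "j = 1")
  case True then show ?thesis by simp
next
  case False
  then have "2 \<le> j" using assms by simp
  then have "(1 - int j) mod int M = 1 - int j + int M"
  proof -
    have "(1 - int j) mod int M = (1 - int j + int M) mod int M" by simp
    also have "\<dots> = 1 - int j + int M" using assms \<open>2 \<le> j\<close> by (intro mod_pos_pos_trivial) simp_all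
    finally show ?thesis .
  qed
  then show ?thesis using False assms by simp
qed

context cm begin

lemma deg: assumes x: "x \<in> Vs n m" shows "card {y. adj n m x y} = 2 * m"
proof -
  obtain I J where xI: "x = vv I J" using Vs_ex x by blast
  let ?A = "(\<lambda>K. vv (I+1) K) ` {0..<int m}"
  let ?B = "(\<lambda>K. vv (I-1) K) ` {0..<int m}"
  have S: "{y. adj n m x y} = ?A \<union> ?B"
  proof
    show "{y. adj n m x y} \<subseteq> ?A \<union> ?B"
    proof
      fix y assume "y \<in> {y. adj n m x y}"
      then have a: "adj n m x y" by simp
      then have "y \<in> Vs n m" using adj_Vs by blast
      then obtain I' K where yI: "y = vv I' K" using Vs_ex by blast
      have Km: "K mod int m \<in> {0..<int m}" using mpos by simp
      have Kd: "int m dvd K - K mod int m" by (simp add: mod_eq_dvd_iff[symmetric])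
      from a have "int n dvd (I' - I - 1) \<or> int n dvd (I' - I + 1)" unfolding xI yI adj_vv .
      then show "y \<in> ?A \<union> ?B"
      proof
        assume "int n dvd (I' - I - 1)"
        then have "y = vv (I+1) (K mod int m)" unfolding yI using Kd by (intro vv_cong_dvd) (simp_all add: algebra_simps)
        then show ?thesis using Km by blast
      next
        assume "int n dvd (I' - I + 1)"
        then have "y = vv (I-1) (K mod int m)" unfolding yI using Kd by (intro vv_cong_dvd) (simp_all add: algebra_simps)
        then show ?thesis using Km by blast
      qed
    qed
    show "?A \<union> ?B \<subseteq> {y. adj n m x y}" unfolding xI by (auto simp: adj_vv)
  qed
  have inj: "inj_on (\<lambda>K. vv X K) {0..<int m}" for X
  proof (rule inj_onI)
    fix K K' assume "K \<in> {0..<int m}" "K' \<in> {0..<int m}" "vv X K = vv X K'"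
    then show "K = K'" by (simp add: vv_eq_iff)
  qed
  have disj: "?A \<inter> ?B = {}"
  proof (rule ccontr)
    assume "?A \<inter> ?B \<noteq> {}"
    then obtain y where "y \<in> ?A" "y \<in> ?B" by blast
    then obtain K K' where "y = vv (I+1) K" "y = vv (I-1) K'" by blast
    then have "vv (I+1) K = vv (I-1) K'" by simp
    then have "int n dvd (I+1) - (I-1)" by (simp add: vv_eq_dvd)
    then show False using n_ndvd2 by simp
  qed
  have "card ?A = m" "card ?B = m" using inj by (simp_all add: card_image)
  then show ?thesis unfolding S using disj by (simp add: card_Un_disjoint)
qed

lemma maptype: "map_type n m rh n (2 * m)"
  unfolding map_type_def using face_card deg by blast

lemma int_mod_nat: "nat (int i mod int k) = i mod k"
  by (simp add: nat_mod_as_int)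

lemma cperm_pow: "(cperm m ^^ k) (nat (X mod int m) + 1) = nat ((X + int k) mod int m) + 1"
proof (induction k)
  case 0 then show ?case by simp
next
  case (Suc k)
  have "cperm m (nat ((X + int k) mod int m) + 1) = nat ((X + int (Suc k)) mod int m) + 1"
  proof -
    have "int ((nat ((X + int k) mod int m) + 1) mod m) = ((X + int k) mod int m + 1) mod int m"
      using mpos by (simp add: zmod_int add.commute)
    also have "\<dots> = (X + int k + 1) mod int m" by (simp add: mod_simps)
    also have "X + int k + 1 = X + int (Suc k)" by simp
    finally show ?thesis unfolding cperm_def using mpos by (simp add: nat_eq_iff)
  qed
  then show ?case using Suc by simp
qed

lemma eta1_eq: "eta1 n m = Gm 1 1 (-1) 0 0 0"
proof
  fix x show "eta1 n m x = Gm 1 1 (-1) 0 0 0 x"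
  proof (cases "x \<in> Vs n m")
    case False then show ?thesis unfolding eta1_def Gm_def by simp
  next
    case True
    obtain i j where x: "x = (i, j)" by (cases x)
    with True have ij: "1 \<le> i" "i \<le> n" "1 \<le> j" "j \<le> m" unfolding Vs_def by auto
    have "Gm 1 1 (-1) 0 0 0 x = vv (int i) (1 - int j)"
      unfolding Gm_def using True x by (simp add: ci_def)
    also have "\<dots> = (rperm n i, tperm m j)"
      unfolding vv_def rperm_def tperm_def using perm_form[of j m] ij by (simp add: int_mod_nat)
    finally show ?thesis unfolding eta1_def using True x by simp
  qed
qed

lemma eta2_eq: "eta2 n m = Gm (-1) 0 (-1) 1 0 0"
proof
  fix x show "eta2 n m x = Gm (-1) 0 (-1) 1 0 0 x"
  proof (cases "x \<in> Vs n m")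
    case False then show ?thesis unfolding eta2_def Gm_def by simp
  next
    case True
    obtain i j where x: "x = (i, j)" by (cases x)
    with True have ij: "1 \<le> i" "i \<le> n" "1 \<le> j" "j \<le> m" unfolding Vs_def by auto
    have dv: "int ((i - 1) div 2) = (int i - 1) div 2" using ij by (simp add: of_nat_div of_nat_diff)
    have "Gm (-1) 0 (-1) 1 0 0 x = vv (1 - int i) ((1 - int j) + (int i - 1) div 2)"
      unfolding Gm_def using True x by (simp add: ci_def)
    also have "\<dots> = (zperm n i, gamma m i j)"
    proof -
      have "gamma m i j = (cperm m ^^ ((i - 1) div 2)) (nat ((1 - int j) mod int m) + 1)"
        unfolding gamma_def tperm_def using perm_form[of j m] ij by simp
      also have "\<dots> = nat ((1 - int j + (int i - 1) div 2) mod int m) + 1"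
        unfolding cperm_pow dv ..
      finally show ?thesis
        unfolding vv_def zperm_def using perm_form[of i n] ij by simp
    qed
    finally show ?thesis unfolding eta2_def using True x by simp
  qed
qed

lemma main_loc:
  "rotation_system n m rh \<and> polytopal n m rh \<and> reflexible n m rh \<and> map_type n m rh n (2 * m) \<and>
   (\<exists>v w F s1 s2. is_flag n m rh v w F \<and> distinguished n m rh v w F s1 s2 \<and>
      gen_grp {s1, s2} = gen_grp {eta1 n m, eta2 n m})"
proof -
  let ?v = "vv 0 0" and ?w = "vv (-1) 0" and ?F = "range (BFd 0 0)"
  let ?s1 = "Gm 1 1 (-1) 0 0 0" and ?s2 = "Gm (-1) 0 (-1) 1 0 0"
  have s2v: "?s2 = vrot 0 0" unfolding vrot_def val_def vbe_def by simp
  have a1: "map_aut n m rh ?s1" by (rule Gm_aut_pres) (simp_all add: orient_P1)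
  have o1: "orient_pres n m rh ?s1" by (simp add: orient_P1)
  have a2: "map_aut n m rh ?s2" by (rule Gm_aut_pres) (simp_all add: orient_P2)
  have flag: "is_flag n m rh ?v ?w ?F"
  proof -
    have "adj n m ?v ?w" by (simp add: adj_vv)
    moreover have "(?v, ?w) = BFd 0 0 0" unfolding BFd_def by simp
    ultimately show ?thesis unfolding is_flag_def using BF_face by blast
  qed
  have st: "gd ?s1 (BFd 0 0 I) = BFd 0 0 (I + 1)" for I
    unfolding BFd_def gd_def fst_conv snd_conv Gm_vv
    by (intro arg_cong2[where f=Pair] vv_eqI) (simp_all add: algebra_simps)
  have dl: "(1::int) * 1 = 1" by simp
  have fi: "face_image n m rh ?s1 ?F = ?F"
    using fam_rot[where D="BFd 0 0" and g="?s1" and dl=1, OF BF_cong a1 o1 st dl] by blast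
  have ph: "\<forall>d\<in>?F. ?s1 (fst (phi rh d)) = fst d"
  proof
    fix d assume "d \<in> ?F"
    then obtain I where d: "d = BFd 0 0 I" by auto
    show "?s1 (fst (phi rh d)) = fst d" unfolding d phi_BF unfolding BFd_def fst_conv Gm_vv
      by (rule vv_eqI) simp_all
  qed
  have fix2: "?s2 ?v = ?v" unfolding Gm_vv by (rule vv_eqI) simp_all
  have act: "\<forall>d\<in>darts n m. fst d = ?v \<longrightarrow> ?s2 (snd d) = snd (rh d)"
    unfolding s2v using vrot_acts by blast
  have c1: "(?s2 \<circ> ?s1) ?v = ?w" unfolding comp_def Gm_vv by (rule vv_eqI) simp_all
  have c2: "(?s2 \<circ> ?s1) ?w = ?v" unfolding comp_def Gm_vv by (rule vv_eqI) simp_all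
  have inv: "\<forall>x. (?s2 \<circ> ?s1) ((?s2 \<circ> ?s1) x) = x"
  proof
    fix x show "(?s2 \<circ> ?s1) ((?s2 \<circ> ?s1) x) = x"
    proof (cases "x \<in> Vs n m")
      case False then show ?thesis by (simp add: Gm_out)
    next
      case True
      then obtain I J where x: "x = vv I J" using Vs_ex by blast
      show ?thesis unfolding x comp_def Gm_vv using q_id2[of I]
        by (intro vv_eqI) (simp_all add: algebra_simps)
    qed
  qed
  have dist: "distinguished n m rh ?v ?w ?F ?s1 ?s2"
    unfolding distinguished_def using a1 a2 fi ph fix2 act c1 c2 inv by blast
  show ?thesis
    using rotsys polyt reflexible_rh maptype flag dist unfolding eta1_eq eta2_eq by blast
qed

end

theorem proposition5p7:
  fixes s m n :: nat
  assumes "odd m" and "m \<ge> 3" and "even s" and "\<not> 4 dvd s" and "s \<ge> 2" and "n = s * m"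
  shows "\<exists>rho. rotation_system n m rho \<and> polytopal n m rho \<and> reflexible n m rho \<and>
           map_type n m rho n (2 * m) \<and>
           (\<exists>v w F s1 s2. is_flag n m rho v w F \<and> distinguished n m rho v w F s1 s2 \<and>
              gen_grp {s1, s2} = gen_grp {eta1 n m, eta2 n m})"
proof -
  obtain h where h: "s = 2 * h" using assms(3) by blast
  interpret cm n m h
  proof
    show "3 \<le> m" by fact
    show "n = 2 * m * h" using assms(6) h by simp
    show "1 \<le> h" using assms(5) h by simp
  qed
  show ?thesis using main_loc by blast
qed

end
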